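(* Let $(S_n)_{n\ge0}=((S_n^{(1)},S_n^{(2)}))_{n\ge 0}$ be a random walk in $\mathbb Z^2$ with $S_0=(0,0)$ and i.i.d. increments $\mathcal X_k$ satisfying $$P(\mathcal X_k=(1,0))=\omega,\quad P(\mathcal X_k=(-1,0))=\varepsilon,\quad P(\mathcal X_k=(0,1))=\gamma,\quad P(\mathcal X_k=(0,-1))=\delta,$$ where $\omega,\varepsilon,\gamma,\delta\ge0$ and $\omega+\varepsilon+\gamma+\delta=1$. Then for every $n\ge1$, $x=0,1,\dots,n$ and $-n\le y\le n$, $$P\big(S_n^{(2)}=y\mid S_n^{(1)}=x\big)=P\big(S_n^{(2)}=y\mid S_n^{(1)}=-x\big).$$
   Context: Conditional probabilities are considered for conditioning events of positive probability. *)

theory Defs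
  imports "HOL-Probability.Probability"
begin

definition step_pmf :: "real \<Rightarrow> real \<Rightarrow> real \<Rightarrow> real \<Rightarrow> (int \<times> int) pmf" where
  "step_pmf \<omega> \<epsilon> \<gamma> \<delta> =
     pmf_of_list [((1,0), \<omega>), ((-1,0), \<epsilon>), ((0,1), \<gamma>), ((0,-1), \<delta>)]"

definition walk_pmf :: "real \<Rightarrow> real \<Rightarrow> real \<Rightarrow> real \<Rightarrow> nat \<Rightarrow> (int \<times> int) pmf" where
  "walk_pmf \<omega> \<epsilon> \<gamma> \<delta> n =
     map_pmf (\<lambda>X. (\<Sum>k<n. fst (X k), \<Sum>k<n. snd (X k)))
       (Pi_pmf {..<n} (0,0) (\<lambda>_. step_pmf \<omega> \<epsilon> \<gamma> \<delta>))"

definition cond_prob :: "'a pmf \<Rightarrow> 'a set \<Rightarrow> 'a set \<Rightarrow> real" where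
  "cond_prob p A B = measure_pmf.prob p (A \<inter> B) / measure_pmf.prob p B"

end

theory Submission
  imports Defs
begin
lemma mp: "map_pmf f (pair_pmf A B) = bind_pmf A (\<lambda>a. map_pmf (\<lambda>b. f (a,b)) B)"
  unfolding pair_pmf_def map_bind_pmf by (simp add: map_pmf_def bind_assoc_pmf bind_return_pmf)

lemma meas_bind: "measure_pmf.prob (bind_pmf M N) X = (\<integral>x. measure_pmf.prob (N x) X \<partial>measure_pmf M)"
proof -
  have "ennreal (measure_pmf.prob (bind_pmf M N) X) = (\<integral>\<^sup>+x. ennreal (measure_pmf.prob (N x) X) \<partial>M)"
    by (simp add: measure_pmf.emeasure_eq_measure[symmetric])
  also have "\<dots> = ennreal (\<integral>x. measure_pmf.prob (N x) X \<partial>M)"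
    by (intro nn_integral_eq_integral measure_pmf.integrable_const_bound[where B=1]) auto
  finally show ?thesis by (simp add: ennreal_inj)
qed

locale W = fixes \<omega> \<epsilon> \<gamma> \<delta> :: real
  assumes nn: "\<omega> \<ge> 0" "\<epsilon> \<ge> 0" "\<gamma> \<ge> 0" "\<delta> \<ge> 0" and s1: "\<omega> + \<epsilon> + \<gamma> + \<delta> = 1"
begin
lemma wf: "pmf_of_list_wf [((1::int,0::int), \<omega>), ((-1,0), \<epsilon>), ((0,1), \<gamma>), ((0,-1), \<delta>)]"
  using nn s1 by (intro pmf_of_list_wfI) auto

lemma step_set: "set_pmf (step_pmf \<omega> \<epsilon> \<gamma> \<delta>) \<subseteq> {(1,0),(-1,0),(0,1),(0,-1)}"
  unfolding step_pmf_def using set_pmf_of_list[OF wf] by auto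

lemma step_pmf_vals: "pmf (step_pmf \<omega> \<epsilon> \<gamma> \<delta>) (1,0) = \<omega>" "pmf (step_pmf \<omega> \<epsilon> \<gamma> \<delta>) (-1,0) = \<epsilon>"
  "pmf (step_pmf \<omega> \<epsilon> \<gamma> \<delta>) (0,1) = \<gamma>" "pmf (step_pmf \<omega> \<epsilon> \<gamma> \<delta>) (0,-1) = \<delta>"
  unfolding step_pmf_def by (simp_all add: pmf_pmf_of_list[OF wf])

lemma walk_Suc: "walk_pmf \<omega> \<epsilon> \<gamma> \<delta> (Suc n) = map_pmf (\<lambda>(d,s). (fst s + fst d, snd s + snd d))
   (pair_pmf (step_pmf \<omega> \<epsilon> \<gamma> \<delta>) (walk_pmf \<omega> \<epsilon> \<gamma> \<delta> n))"
proof -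
  have "{..<Suc n} = insert n {..<n}" by auto
  then have "Pi_pmf {..<Suc n} (0,0) (\<lambda>_. step_pmf \<omega> \<epsilon> \<gamma> \<delta>) =
     map_pmf (\<lambda>(y,f). f(n:=y)) (pair_pmf (step_pmf \<omega> \<epsilon> \<gamma> \<delta>) (Pi_pmf {..<n} (0,0) (\<lambda>_. step_pmf \<omega> \<epsilon> \<gamma> \<delta>)))"
    by (simp add: Pi_pmf_insert)
  note pi = this
  moreover have "\<And>f::nat\<Rightarrow>int\<times>int. (\<Sum>k<n. fst (f k)) = (\<Sum>k<n. fst ((f(n:=y)) k))"
     "\<And>f::nat\<Rightarrow>int\<times>int. (\<Sum>k<n. snd (f k)) = (\<Sum>k<n. snd ((f(n:=y)) k))" for y
    by (auto intro!: sum.cong)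
  ultimately show ?thesis
    unfolding walk_pmf_def pair_map_pmf2 pi map_pmf_comp
    by (intro map_pmf_cong) (auto simp: add.commute split: prod.splits)
qed

lemma meas_Suc: "measure_pmf.prob (walk_pmf \<omega> \<epsilon> \<gamma> \<delta> (Suc n)) X =
   \<omega> * measure_pmf.prob (walk_pmf \<omega> \<epsilon> \<gamma> \<delta> n) {s. (fst s + 1, snd s) \<in> X}
 + \<epsilon> * measure_pmf.prob (walk_pmf \<omega> \<epsilon> \<gamma> \<delta> n) {s. (fst s - 1, snd s) \<in> X}
 + \<gamma> * measure_pmf.prob (walk_pmf \<omega> \<epsilon> \<gamma> \<delta> n) {s. (fst s, snd s + 1) \<in> X}
 + \<delta> * measure_pmf.prob (walk_pmf \<omega> \<epsilon> \<gamma> \<delta> n) {s. (fst s, snd s - 1) \<in> X}"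
proof -
  let ?W = "walk_pmf \<omega> \<epsilon> \<gamma> \<delta> n"
  let ?F = "\<lambda>d. measure_pmf.prob (map_pmf (\<lambda>s. (fst s + fst d, snd s + snd d)) ?W) X"
  have "measure_pmf.prob (walk_pmf \<omega> \<epsilon> \<gamma> \<delta> (Suc n)) X = (\<integral>d. ?F d \<partial>measure_pmf (step_pmf \<omega> \<epsilon> \<gamma> \<delta>))"
    unfolding walk_Suc mp meas_bind by simp
  also have "\<dots> = (\<Sum>d\<in>{(1,0),(-1,0),(0,1),(0,-1)}. ?F d * pmf (step_pmf \<omega> \<epsilon> \<gamma> \<delta>) d)"
    by (rule integral_measure_pmf_real) (use step_set in auto)
  also have "\<dots> = \<omega> * measure_pmf.prob (walk_pmf \<omega> \<epsilon> \<gamma> \<delta> n) {s. (fst s + 1, snd s) \<in> X}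
 + \<epsilon> * measure_pmf.prob (walk_pmf \<omega> \<epsilon> \<gamma> \<delta> n) {s. (fst s - 1, snd s) \<in> X}
 + \<gamma> * measure_pmf.prob (walk_pmf \<omega> \<epsilon> \<gamma> \<delta> n) {s. (fst s, snd s + 1) \<in> X}
 + \<delta> * measure_pmf.prob (walk_pmf \<omega> \<epsilon> \<gamma> \<delta> n) {s. (fst s, snd s - 1) \<in> X}" by (simp add: step_pmf_vals vimage_def algebra_simps)
  finally show ?thesis .
qed

lemma walk0: "walk_pmf \<omega> \<epsilon> \<gamma> \<delta> 0 = return_pmf (0,0)"
  unfolding walk_pmf_def by simp

lemma key: "measure_pmf.prob (walk_pmf \<omega> \<epsilon> \<gamma> \<delta> n) {S. fst S = int k \<and> snd S \<in> B} * \<epsilon> ^ k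
  = measure_pmf.prob (walk_pmf \<omega> \<epsilon> \<gamma> \<delta> n) {S. fst S = - int k \<and> snd S \<in> B} * \<omega> ^ k"
proof (induction n arbitrary: k B)
  case 0
  show ?case by (cases k) (auto simp: walk0)
next
  case (Suc n)
  let ?P = "\<lambda>x B. measure_pmf.prob (walk_pmf \<omega> \<epsilon> \<gamma> \<delta> n) {S. fst S = x \<and> snd S \<in> B}"
  show ?case
  proof (cases k)
    case 0 then show ?thesis by simp
  next
    case (Suc j)
    let ?B1 = "{y. y + 1 \<in> B}" and ?B2 = "{y. y - 1 \<in> B}"
    have e1: "{s. (fst s + 1, snd s) \<in> {S. fst S = int k \<and> snd S \<in> B}} = {S. fst S = int j \<and> snd S \<in> B}"
      using Suc by auto
    have e2: "{s. (fst s - 1, snd s) \<in> {S. fst S = int k \<and> snd S \<in> B}} = {S. fst S = int (Suc (Suc j)) \<and> snd S \<in> B}"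
      using Suc by auto
    have e3: "{s. (fst s, snd s + 1) \<in> {S. fst S = int k \<and> snd S \<in> B}} = {S. fst S = int k \<and> snd S \<in> ?B1}"
      by auto
    have e4: "{s. (fst s, snd s - 1) \<in> {S. fst S = int k \<and> snd S \<in> B}} = {S. fst S = int k \<and> snd S \<in> ?B2}"
      by auto
    have f1: "{s. (fst s + 1, snd s) \<in> {S. fst S = - int k \<and> snd S \<in> B}} = {S. fst S = - int (Suc (Suc j)) \<and> snd S \<in> B}"
      using Suc by auto
    have f2: "{s. (fst s - 1, snd s) \<in> {S. fst S = - int k \<and> snd S \<in> B}} = {S. fst S = - int j \<and> snd S \<in> B}"
      using Suc by auto
    have f3: "{s. (fst s, snd s + 1) \<in> {S. fst S = - int k \<and> snd S \<in> B}} = {S. fst S = - int k \<and> snd S \<in> ?B1}"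
      by auto
    have f4: "{s. (fst s, snd s - 1) \<in> {S. fst S = - int k \<and> snd S \<in> B}} = {S. fst S = - int k \<and> snd S \<in> ?B2}"
      by auto
    have i1: "?P (int j) B * \<epsilon> ^ j = ?P (- int j) B * \<omega> ^ j" by (rule Suc.IH)
    have i2: "?P (int (Suc (Suc j))) B * \<epsilon> ^ Suc (Suc j) = ?P (- int (Suc (Suc j))) B * \<omega> ^ Suc (Suc j)" by (rule Suc.IH)
    have i3: "?P (int k) ?B1 * \<epsilon> ^ k = ?P (- int k) ?B1 * \<omega> ^ k" by (rule Suc.IH)
    have i4: "?P (int k) ?B2 * \<epsilon> ^ k = ?P (- int k) ?B2 * \<omega> ^ k" by (rule Suc.IH)
    have a1: "\<omega> * ?P (int j) B * \<epsilon> ^ k = \<epsilon> * ?P (- int j) B * \<omega> ^ k"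
      using i1 Suc by (simp add: algebra_simps)
    have a2: "\<epsilon> * ?P (int (Suc (Suc j))) B * \<epsilon> ^ k = \<omega> * ?P (- int (Suc (Suc j))) B * \<omega> ^ k"
      using i2 Suc by (simp add: algebra_simps)
    show ?thesis
      unfolding meas_Suc e1 e2 e3 e4 f1 f2 f3 f4
      using a1 a2 i3 i4 by (simp add: algebra_simps)
  qed
qed

lemma degen: assumes "\<omega> = 0" "\<epsilon> = 0"
  shows "measure_pmf.prob (walk_pmf \<omega> \<epsilon> \<gamma> \<delta> n) {S. fst S \<noteq> 0} = 0"
proof (induction n)
  case 0 show ?case by (simp add: walk0)
next
  case (Suc n)
  have "{s. (fst s, snd s + 1) \<in> {S. fst S \<noteq> 0}} = {S. fst S \<noteq> 0}"
       "{s. (fst s, snd s - 1) \<in> {S. fst S \<noteq> 0}} = {S. fst S \<noteq> 0}" by auto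
  then show ?case unfolding meas_Suc using Suc assms by simp
qed
end

theorem theorem1:
  fixes \<omega> \<epsilon> \<gamma> \<delta> :: real and n :: nat and x y :: int
  assumes "\<omega> \<ge> 0" "\<epsilon> \<ge> 0" "\<gamma> \<ge> 0" "\<delta> \<ge> 0"
    and "\<omega> + \<epsilon> + \<gamma> + \<delta> = 1"
    and "n \<ge> 1"
    and "0 \<le> x" "x \<le> int n"
    and "- int n \<le> y" "y \<le> int n"
    and "measure_pmf.prob (walk_pmf \<omega> \<epsilon> \<gamma> \<delta> n) {S. fst S = x} > 0"
    and "measure_pmf.prob (walk_pmf \<omega> \<epsilon> \<gamma> \<delta> n) {S. fst S = - x} > 0"
  shows "cond_prob (walk_pmf \<omega> \<epsilon> \<gamma> \<delta> n) {S. snd S = y} {S. fst S = x}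
       = cond_prob (walk_pmf \<omega> \<epsilon> \<gamma> \<delta> n) {S. snd S = y} {S. fst S = - x}"
proof -
  interpret W \<omega> \<epsilon> \<gamma> \<delta> using assms(1-5) by unfold_locales
  let ?M = "walk_pmf \<omega> \<epsilon> \<gamma> \<delta> n"
  define k where "k = nat x"
  have xk: "x = int k" using assms(7) k_def by simp
  show ?thesis
  proof (cases "k = 0")
    case True then show ?thesis using xk by simp
  next
    case False
    have ky: "measure_pmf.prob ?M {S. fst S = int k \<and> snd S \<in> {y}} * \<epsilon> ^ k
      = measure_pmf.prob ?M {S. fst S = - int k \<and> snd S \<in> {y}} * \<omega> ^ k" by (rule key)
    have ku: "measure_pmf.prob ?M {S. fst S = int k \<and> snd S \<in> UNIV} * \<epsilon> ^ k
      = measure_pmf.prob ?M {S. fst S = - int k \<and> snd S \<in> UNIV} * \<omega> ^ k" by (rule key)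
    have A: "measure_pmf.prob ?M {S. fst S = int k} > 0" "measure_pmf.prob ?M {S. fst S = - int k} > 0"
      using assms(11,12) xk by auto
    have "\<not> (\<omega> = 0 \<and> \<epsilon> = 0)"
    proof
      assume h: "\<omega> = 0 \<and> \<epsilon> = 0"
      have "measure_pmf.prob ?M {S. fst S = int k} \<le> measure_pmf.prob ?M {S. fst S \<noteq> 0}"
        using False by (intro measure_pmf.finite_measure_mono) auto
      then show False using degen[of n] h A by simp
    qed
    moreover have "\<epsilon> \<noteq> 0 \<or> \<omega> = 0" using ku A False by (auto simp: power_0_left)
    moreover have "\<omega> \<noteq> 0 \<or> \<epsilon> = 0" using ku A False by (auto simp: power_0_left)
    ultimately have ne: "\<omega> \<noteq> 0" "\<epsilon> \<noteq> 0" by auto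
    have s1: "{S. snd S = y} \<inter> {S. fst S = x} = {S. fst S = int k \<and> snd S \<in> {y}}"
      "{S. snd S = y} \<inter> {S. fst S = - x} = {S. fst S = - int k \<and> snd S \<in> {y}}"
      "{S. fst S = x} = {S. fst S = int k \<and> snd S \<in> UNIV}"
      "{S. fst S = - x} = {S. fst S = - int k \<and> snd S \<in> UNIV}" using xk by auto
    have "measure_pmf.prob ?M {S. fst S = int k \<and> snd S \<in> {y}} / measure_pmf.prob ?M {S. fst S = int k \<and> snd S \<in> UNIV}
       = (measure_pmf.prob ?M {S. fst S = int k \<and> snd S \<in> {y}} * \<epsilon> ^ k) / (measure_pmf.prob ?M {S. fst S = int k \<and> snd S \<in> UNIV} * \<epsilon> ^ k)"
      using ne by simp
    also have "\<dots> = (measure_pmf.prob ?M {S. fst S = - int k \<and> snd S \<in> {y}} * \<omega> ^ k) / (measure_pmf.prob ?M {S. fst S = - int k \<and> snd S \<in> UNIV} * \<omega> ^ k)"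
      using ky ku by simp
    also have "\<dots> = measure_pmf.prob ?M {S. fst S = - int k \<and> snd S \<in> {y}} / measure_pmf.prob ?M {S. fst S = - int k \<and> snd S \<in> UNIV}"
      using ne by simp
    finally show ?thesis unfolding cond_prob_def s1(1,2) by (simp only: s1(3,4))
  qed
qed

end
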